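(* Let $T$ be a complete theory, $\varphi(x;y)$ a formula with characteristic sequence $\langle P_n:n<\omega\rangle$. Suppose there exists $\delta$ with $0<\delta<1$ such that for all $0<\epsilon<1$ and all $N\in\mathbb{N}$ there exist disjoint finite subsets $X_N,Y_N\subseteq P_1$ with $|X_N|=|Y_N|\geq N$ such that $(X_N,Y_N)$ is $\epsilon$-regular with density $\delta$ (with respect to the edge relation $P_2$). Then $P_1$ contains an infinite empty pair.
   Context: The characteristic sequence: $P_n(y_1,\dots,y_n):=\exists x\bigwedge_{i\le n}\varphi(x;y_i)$, interpreted in a sufficiently saturated model of $T$; standing assumption $T\vdash\forall y\exists z\forall x(\varphi(x;z)\leftrightarrow\neg\varphi(x;y))$. For finite disjoint $X,Y$, $e(X,Y)$ is the number of pairs $(x,y)\in X\times Y$ with $P_2(x,y)$, and the density is $\delta(X,Y)=e(X,Y)/|X||Y|$ (and $0$ if one is empty). $(X,Y)$ is $\epsilon$-regular if for all $X'\subseteq X$, $Y'\subseteq Y$ with $|X'|\ge\epsilon|X|$, $|Y'|\ge\epsilon|Y|$, $|\delta(X,Y)-\delta(X',Y')|<\epsilon$. An infinite empty pair in $P_1$ is a pair $(X,Y)$ of subsets of $P_1$ with $|X|=|Y|\ge\aleph_0$ and $\neg P_2(x,y)$ for all $x\in X,y\in Y$. *)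

theory Defs
  imports Complex_Main "HOL-Library.Equipollence" "HOL-Library.Countable_Set"
begin

text \<open>We work in the reduct of the monster model to the language consisting of
the single formula phi(x;y): a two-sorted structure with x-sort 'a, y-sort 'b
(tuples of the model, if x, y are tuples) and the relation phi.\<close>

datatype 'a vtm = Var nat | Par 'a

datatype ('a, 'b) fm =
    Rel "'a vtm" "'b vtm"
  | EqX "'a vtm" "'a vtm"
  | EqY "'b vtm" "'b vtm"
  | Neg "('a, 'b) fm"
  | Conj "('a, 'b) fm" "('a, 'b) fm"
  | ExX nat "('a, 'b) fm"
  | ExY nat "('a, 'b) fm"

primrec eval_tm :: "(nat \<Rightarrow> 'a) \<Rightarrow> 'a vtm \<Rightarrow> 'a" where
  "eval_tm e (Var n) = e n"
| "eval_tm e (Par a) = a"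

primrec sat :: "('a \<Rightarrow> 'b \<Rightarrow> bool) \<Rightarrow> (nat \<Rightarrow> 'a) \<Rightarrow> (nat \<Rightarrow> 'b) \<Rightarrow> ('a, 'b) fm \<Rightarrow> bool" where
  "sat R ex ey (Rel s t) = R (eval_tm ex s) (eval_tm ey t)"
| "sat R ex ey (EqX s t) = (eval_tm ex s = eval_tm ex t)"
| "sat R ex ey (EqY s t) = (eval_tm ey s = eval_tm ey t)"
| "sat R ex ey (Neg f) = (\<not> sat R ex ey f)"
| "sat R ex ey (Conj f g) = (sat R ex ey f \<and> sat R ex ey g)"
| "sat R ex ey (ExX n f) = (\<exists>a. sat R (ex(n := a)) ey f)"
| "sat R ex ey (ExY n f) = (\<exists>b. sat R ex (ey(n := b)) f)"

primrec tm_params :: "'a vtm \<Rightarrow> 'a set" where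
  "tm_params (Var n) = {}"
| "tm_params (Par a) = {a}"

primrec xparams :: "('a, 'b) fm \<Rightarrow> 'a set" where
  "xparams (Rel s t) = tm_params s"
| "xparams (EqX s t) = tm_params s \<union> tm_params t"
| "xparams (EqY s t) = {}"
| "xparams (Neg f) = xparams f"
| "xparams (Conj f g) = xparams f \<union> xparams g"
| "xparams (ExX n f) = xparams f"
| "xparams (ExY n f) = xparams f"

primrec yparams :: "('a, 'b) fm \<Rightarrow> 'b set" where
  "yparams (Rel s t) = tm_params t"
| "yparams (EqX s t) = {}"
| "yparams (EqY s t) = tm_params s \<union> tm_params t"
| "yparams (Neg f) = yparams f"
| "yparams (Conj f g) = yparams f \<union> yparams g"
| "yparams (ExX n f) = yparams f"
| "yparams (ExY n f) = yparams f"

definition satisfiable :: "('a \<Rightarrow> 'b \<Rightarrow> bool) \<Rightarrow> ('a, 'b) fm set \<Rightarrow> bool" where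
  "satisfiable R \<Sigma> \<longleftrightarrow> (\<exists>ex ey. \<forall>f\<in>\<Sigma>. sat R ex ey f)"

text \<open>Saturation (aleph_1-saturation): every finitely satisfiable set of formulas
in countably many variables over a countable set of parameters is realized.\<close>
definition saturated :: "('a \<Rightarrow> 'b \<Rightarrow> bool) \<Rightarrow> bool" where
  "saturated R \<longleftrightarrow>
     (\<forall>\<Sigma>. countable (\<Union> (xparams ` \<Sigma>)) \<and> countable (\<Union> (yparams ` \<Sigma>))
        \<and> (\<forall>\<Sigma>0. \<Sigma>0 \<subseteq> \<Sigma> \<and> finite \<Sigma>0 \<longrightarrow> satisfiable R \<Sigma>0)
        \<longrightarrow> satisfiable R \<Sigma>)"

definition P1 :: "('a \<Rightarrow> 'b \<Rightarrow> bool) \<Rightarrow> 'b \<Rightarrow> bool" where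
  "P1 \<phi> y \<longleftrightarrow> (\<exists>x. \<phi> x y)"

definition P2 :: "('a \<Rightarrow> 'b \<Rightarrow> bool) \<Rightarrow> 'b \<Rightarrow> 'b \<Rightarrow> bool" where
  "P2 \<phi> y1 y2 \<longleftrightarrow> (\<exists>x. \<phi> x y1 \<and> \<phi> x y2)"

definition edges :: "('a \<Rightarrow> 'b \<Rightarrow> bool) \<Rightarrow> 'b set \<Rightarrow> 'b set \<Rightarrow> nat" where
  "edges \<phi> X Y = card {(x, y). x \<in> X \<and> y \<in> Y \<and> P2 \<phi> x y}"

definition density :: "('a \<Rightarrow> 'b \<Rightarrow> bool) \<Rightarrow> 'b set \<Rightarrow> 'b set \<Rightarrow> real" where
  "density \<phi> X Y =
     (if X = {} \<or> Y = {} then 0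
      else real (edges \<phi> X Y) / (real (card X) * real (card Y)))"

definition eps_regular :: "('a \<Rightarrow> 'b \<Rightarrow> bool) \<Rightarrow> real \<Rightarrow> 'b set \<Rightarrow> 'b set \<Rightarrow> bool" where
  "eps_regular \<phi> \<epsilon> X Y \<longleftrightarrow>
     (\<forall>X' Y'. X' \<subseteq> X \<and> Y' \<subseteq> Y \<and> real (card X') \<ge> \<epsilon> * real (card X)
        \<and> real (card Y') \<ge> \<epsilon> * real (card Y)
        \<longrightarrow> \<bar>density \<phi> X Y - density \<phi> X' Y'\<bar> < \<epsilon>)"

definition infinite_empty_pair :: "('a \<Rightarrow> 'b \<Rightarrow> bool) \<Rightarrow> 'b set \<Rightarrow> 'b set \<Rightarrow> bool" where
  "infinite_empty_pair \<phi> X Y \<longleftrightarrow>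
     X \<subseteq> {y. P1 \<phi> y} \<and> Y \<subseteq> {y. P1 \<phi> y} \<and> X \<approx> Y \<and> infinite X
     \<and> (\<forall>x\<in>X. \<forall>y\<in>Y. \<not> P2 \<phi> x y)"

end

theory Submission
  imports Defs
begin


lemma edges_sum:
  assumes "finite B" "finite N"
  shows "edges \<phi> B N = (\<Sum>x\<in>B. card {y\<in>N. P2 \<phi> x y})"
proof -
  have "{(x, y). x \<in> B \<and> y \<in> N \<and> P2 \<phi> x y} = Sigma B (\<lambda>x. {y\<in>N. P2 \<phi> x y})" by auto
  thus ?thesis unfolding edges_def using assms by simp
qed

lemma card_split_filter:
  assumes "finite N"
  shows "card {y\<in>N. P y} + card {y\<in>N. \<not> P y} = card N"
proof -
  have "N = {y\<in>N. P y} \<union> {y\<in>N. \<not> P y}" by auto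
  moreover have "{y\<in>N. P y} \<inter> {y\<in>N. \<not> P y} = {}" by auto
  ultimately show ?thesis using assms
    by (metis (no_types, lifting) card_Un_disjoint finite_Un)
qed

lemma finite_empty_pairs:
  fixes \<phi> :: "'a \<Rightarrow> 'b \<Rightarrow> bool"
  assumes reg: "\<exists>\<delta>::real. 0 < \<delta> \<and> \<delta> < 1 \<and>
      (\<forall>\<epsilon>::real. 0 < \<epsilon> \<and> \<epsilon> < 1 \<longrightarrow> (\<forall>N::nat. \<exists>X Y.
         finite X \<and> finite Y \<and> X \<inter> Y = {} \<and>
         X \<subseteq> {y. P1 \<phi> y} \<and> Y \<subseteq> {y. P1 \<phi> y} \<and>
         card X = card Y \<and> card X \<ge> N \<and>
         eps_regular \<phi> \<epsilon> X Y \<and> density \<phi> X Y = \<delta>))"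
  shows "\<exists>A B. finite A \<and> finite B \<and> card A = t \<and> card B = t \<and> A \<subseteq> {y. P1 \<phi> y}
     \<and> B \<subseteq> {y. P1 \<phi> y} \<and> (\<forall>x\<in>A. \<forall>y\<in>B. \<not> P2 \<phi> x y)"
proof -
  obtain \<delta> :: real where d: "0<\<delta>" "\<delta><1" and R: "\<forall>\<epsilon>::real. 0 < \<epsilon> \<and> \<epsilon> < 1 \<longrightarrow> (\<forall>N::nat. \<exists>X Y.
         finite X \<and> finite Y \<and> X \<inter> Y = {} \<and>
         X \<subseteq> {y. P1 \<phi> y} \<and> Y \<subseteq> {y. P1 \<phi> y} \<and>
         card X = card Y \<and> card X \<ge> N \<and>
         eps_regular \<phi> \<epsilon> X Y \<and> density \<phi> X Y = \<delta>)" using reg by blast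
  define c where "c = (1-\<delta>)/2"
  have c: "0 < c" "c < 1/2" "1 - c = \<delta> + c" using d by (auto simp: c_def field_simps)
  define \<epsilon> where "\<epsilon> = c^(Suc t)"
  have e0: "0 < \<epsilon>" using c by (simp add: \<epsilon>_def)
  have ec: "\<epsilon> \<le> c" unfolding \<epsilon>_def using c
  proof -
    have "c^t \<le> 1" using c by (intro power_le_one) auto
    hence "c * c^t \<le> c * 1" using c by (intro mult_left_mono) auto
    thus "c^(Suc t) \<le> c" by simp
  qed
  have e1: "\<epsilon> < 1/2" using ec c by linarith
  define N where "N = nat \<lceil>real t / \<epsilon>\<rceil> + 2*t + 1"
  obtain X Y where fX: "finite X" and fY: "finite Y" and XP: "X \<subseteq> {y. P1 \<phi> y}"
     and YP: "Y \<subseteq> {y. P1 \<phi> y}" and cXY: "card X = card Y" and cN: "card X \<ge> N"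
     and er: "eps_regular \<phi> \<epsilon> X Y" and dXY: "density \<phi> X Y = \<delta>"
  proof -
    have e1': "\<epsilon> < 1" using e1 by simp
    show ?thesis using R[rule_format, OF conjI[OF e0 e1'], of N] that by blast
  qed
  have cX1: "real (card X) \<ge> 2*t+1" using cN unfolding N_def by linarith
  have cYt: "\<epsilon> * card Y \<ge> t"
  proof -
    have "real t / \<epsilon> \<le> real (card Y)" using cN cXY unfolding N_def by linarith
    thus ?thesis using e0 by (simp add: field_simps)
  qed
  define NN where "NN S = {y\<in>Y. \<forall>x\<in>S. \<not> P2 \<phi> x y}" for S
  have finNN: "finite (NN S)" for S using fY unfolding NN_def by simp
  have step: "k \<le> t \<Longrightarrow> \<exists>S. S \<subseteq> X \<and> card S = k \<and> c^k * card Y \<le> card (NN S)" for k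
  proof (induction k)
    case 0
    have "NN {} = Y" unfolding NN_def by auto
    then show ?case by (intro exI[of _ "{}"]) auto
  next
    case (Suc k)
    then obtain S where SX: "S \<subseteq> X" and cS: "card S = k" and cNk: "c^k * card Y \<le> card (NN S)"
      by auto
    have kt: "k < t" using Suc by simp
    define Nk where "Nk = NN S"
    have fNk: "finite Nk" using finNN Nk_def by simp
    have NkY: "Nk \<subseteq> Y" unfolding Nk_def NN_def by auto
    have "\<epsilon> \<le> c^k" unfolding \<epsilon>_def using c kt
      by (intro power_decreasing) auto
    hence "\<epsilon> * card Y \<le> c^k * card Y" by (intro mult_right_mono) auto
    hence NkE: "\<epsilon> * card Y \<le> card Nk" using cNk unfolding Nk_def by linarith
    have Ypos: "real (card Y) > 0" using cX1 cXY by simp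
    have "\<epsilon> * card Y > 0" using e0 Ypos by simp
    hence Nkpos: "real (card Nk) > 0" using NkE by linarith
    define B where "B = {x\<in>X. real (card {y\<in>Nk. \<not> P2 \<phi> x y}) < c * card Nk}"
    have fB: "finite B" using fX B_def by simp
    have Bsmall: "real (card B) < \<epsilon> * card X"
    proof (rule ccontr)
      assume "\<not> ?thesis"
      hence Bbig: "\<epsilon> * card X \<le> card B" by simp
      have BX: "B \<subseteq> X" unfolding B_def by auto
      have reg1: "\<bar>density \<phi> X Y - density \<phi> B Nk\<bar> < \<epsilon>"
        using er BX NkY Bbig NkE unfolding eps_regular_def by blast
      have "\<epsilon> * card X > 0" using e0 cX1 by simp
      hence Bpos: "real (card B) > 0" using Bbig by linarith
      hence Bne: "B \<noteq> {}" by auto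
      have Nkne: "Nk \<noteq> {}" using Nkpos by auto
      have each: "(1-c) * card Nk < real (card {y\<in>Nk. P2 \<phi> x y})" if "x \<in> B" for x
      proof -
        have "real (card {y\<in>Nk. P2 \<phi> x y}) + real (card {y\<in>Nk. \<not> P2 \<phi> x y}) = card Nk"
          using card_split_filter[OF fNk, of "P2 \<phi> x"] by linarith
        moreover have "real (card {y\<in>Nk. \<not> P2 \<phi> x y}) < c * card Nk" using that B_def by auto
        ultimately show ?thesis by (simp add: algebra_simps)
      qed
      have "(\<Sum>x\<in>B. (1-c) * card Nk) < (\<Sum>x\<in>B. real (card {y\<in>Nk. P2 \<phi> x y}))"
        using fB Bne each by (intro sum_strict_mono) auto
      hence "real (card B) * ((1-c) * card Nk) < real (edges \<phi> B Nk)"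
        using edges_sum[OF fB fNk, of \<phi>] by simp
      hence "(1-c) < real (edges \<phi> B Nk) / (real (card B) * real (card Nk))"
        using Bpos Nkpos by (simp add: field_simps)
      hence "1 - c < density \<phi> B Nk" unfolding density_def using Bne Nkne by simp
      thus False using reg1 dXY c ec by linarith
    qed
    have "X \<subseteq> (X - B - S) \<union> B \<union> S" by auto
    moreover have "finite ((X - B - S) \<union> B \<union> S)" using fX fB SX finite_subset by blast
    ultimately have "card X \<le> card ((X - B - S) \<union> B \<union> S)" by (simp add: card_mono)
    also have "\<dots> \<le> card (X - B - S) + card B + card S"
      using card_Un_le[of "X - B - S \<union> B" S] card_Un_le[of "X - B - S" B] by linarith
    finally have "real (card X) \<le> card (X - B - S) + card B + k" using cS by linarith
    hence "real (card (X - B - S)) > 0" using Bsmall e1 cX1 kt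
    proof -
      have "\<epsilon> * card X \<le> (1/2) * card X" using e1 by (intro mult_right_mono) auto
      thus ?thesis using \<open>real (card X) \<le> card (X - B - S) + card B + k\<close> Bsmall cX1 kt by linarith
    qed
    hence "X - B - S \<noteq> {}" by (metis card.empty of_nat_0 order_less_irrefl)
    then obtain x where x: "x \<in> X" "x \<notin> B" "x \<notin> S" by blast
    have NNi: "NN (insert x S) = {y\<in>Nk. \<not> P2 \<phi> x y}" unfolding NN_def Nk_def by auto
    have "c * card Nk \<le> real (card {y\<in>Nk. \<not> P2 \<phi> x y})" using x B_def by auto
    moreover have "c^(Suc k) * card Y \<le> c * card Nk"
      using cNk Nk_def c by (simp add: mult.assoc)
    ultimately have "c^(Suc k) * card Y \<le> card {y\<in>Nk. \<not> P2 \<phi> x y}" by linarith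
    hence "c^(Suc k) * card Y \<le> card (NN (insert x S))" unfolding NNi .
    moreover have "card (insert x S) = Suc k" using x cS SX fX
      by (meson card_insert_disjoint finite_subset)
    ultimately show ?case using SX x by (intro exI[of _ "insert x S"]) auto
  qed
  obtain S where SX: "S \<subseteq> X" and cS: "card S = t" and cNt: "c^t * card Y \<le> card (NN S)"
    using step by blast
  have "\<epsilon> \<le> c^t" unfolding \<epsilon>_def using c by (intro power_decreasing) auto
  hence "\<epsilon> * card Y \<le> c^t * card Y" by (simp add: mult_right_mono)
  hence "t \<le> card (NN S)" using cNt cYt by linarith
  then obtain T where TN: "T \<subseteq> NN S" and cT: "card T = t" and fT: "finite T"
    by (meson obtain_subset_with_card_n)
  show ?thesis
    apply (rule exI[of _ S], rule exI[of _ T])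
    using SX cS fX XP TN cT fT YP unfolding NN_def
    by (auto intro: finite_subset)
qed


definition pf :: "nat \<Rightarrow> ('a, 'b) fm" where
  "pf n = ExX 0 (Rel (Var 0) (Var n))"
definition nf :: "nat \<Rightarrow> nat \<Rightarrow> ('a, 'b) fm" where
  "nf i j = Neg (ExX 0 (Conj (Rel (Var 0) (Var (2*i))) (Rel (Var 0) (Var (2*j+1)))))"
definition df :: "nat \<Rightarrow> nat \<Rightarrow> ('a, 'b) fm" where
  "df m n = Neg (EqY (Var m) (Var n))"

lemma sat_pf [simp]: "sat R ex ey (pf n) = P1 R (ey n)"
  by (simp add: pf_def P1_def)
lemma sat_nf [simp]: "sat R ex ey (nf i j) = (\<not> P2 R (ey (2*i)) (ey (2*j+1)))"
  by (simp add: nf_def P2_def)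
lemma sat_df [simp]: "sat R ex ey (df m n) = (ey m \<noteq> ey n)"
  by (simp add: df_def)
lemma params [simp]: "xparams (pf n) = {}" "yparams (pf n) = {}"
  "xparams (nf i j) = {}" "yparams (nf i j) = {}"
  "xparams (df m n) = {}" "yparams (df m n) = {}"
  by (simp_all add: pf_def nf_def df_def)

definition SS :: "nat \<Rightarrow> ('a, 'b) fm set" where
  "SS M = pf ` {..<2*M} \<union> (\<lambda>(i,j). nf i j) ` ({..<M} \<times> {..<M})
     \<union> (\<lambda>(m,n). df m n) ` {(m,n). m < 2*M \<and> n < 2*M \<and> m \<noteq> n}"

lemma SS_mono: "m \<le> n \<Longrightarrow> SS m \<subseteq> SS n"
  unfolding SS_def by (intro Un_mono image_mono) auto

lemma pf_SS: "pf n \<in> SS (Suc n)" unfolding SS_def by auto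
lemma nf_SS: "nf i j \<in> SS (Suc (max i j))"
  unfolding SS_def by (rule UnI1, rule UnI2, rule rev_image_eqI[of "(i,j)"]) auto
lemma df_SS: "m \<noteq> n \<Longrightarrow> df m n \<in> SS (Suc (max m n))"
  unfolding SS_def by (rule UnI2, rule rev_image_eqI[of "(m,n)"]) auto

lemma finite_in_SS:
  assumes "finite F" "F \<subseteq> (\<Union>M. SS M)"
  shows "\<exists>M. F \<subseteq> SS M"
  using assms
proof (induction F rule: finite_induct)
  case empty then show ?case by auto
next
  case (insert f F)
  then obtain M where M: "F \<subseteq> SS M" by auto
  obtain M' where M': "f \<in> SS M'" using insert by auto
  have "SS M \<subseteq> SS (max M M')" "SS M' \<subseteq> SS (max M M')"
    using SS_mono[of M "max M M'"] SS_mono[of M' "max M M'"] by auto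
  then show ?case using M M' by blast
qed

lemma SS_sat:
  fixes \<phi> :: "'a \<Rightarrow> 'b \<Rightarrow> bool"
  assumes "finite A" "finite B" "card A = M" "card B = M" "A \<subseteq> {y. P1 \<phi> y}"
     "B \<subseteq> {y. P1 \<phi> y}" "\<forall>x\<in>A. \<forall>y\<in>B. \<not> P2 \<phi> x y"
  shows "satisfiable \<phi> (SS M)"
proof -
  obtain fA where fA: "bij_betw fA {0..<M} A" using ex_bij_betw_nat_finite[OF assms(1)] assms(3) by auto
  obtain fB where fB: "bij_betw fB {0..<M} B" using ex_bij_betw_nat_finite[OF assms(2)] assms(4) by auto
  have iA: "inj_on fA {0..<M}" and imA: "fA ` {0..<M} = A" using fA unfolding bij_betw_def by auto
  have iB: "inj_on fB {0..<M}" and imB: "fB ` {0..<M} = B" using fB unfolding bij_betw_def by auto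
  have disj: "A \<inter> B = {}"
  proof (rule ccontr)
    assume "A \<inter> B \<noteq> {}"
    then obtain a where a: "a \<in> A" "a \<in> B" by auto
    then have "P1 \<phi> a" using assms(5) by auto
    then have "P2 \<phi> a a" unfolding P1_def P2_def by auto
    then show False using assms(7) a by auto
  qed
  define ey where "ey n = (if even n then fA (n div 2) else fB (n div 2))" for n
  have eyA: "ey n \<in> A" if "even n" "n < 2*M" for n
  proof -
    have "n div 2 \<in> {0..<M}" using that by auto
    then have "fA (n div 2) \<in> A" using imA by blast
    then show ?thesis using that unfolding ey_def by simp
  qed
  have eyB: "ey n \<in> B" if "odd n" "n < 2*M" for n
  proof -
    have "n div 2 \<in> {0..<M}" using that by auto
    then have "fB (n div 2) \<in> B" using imB by blast
    then show ?thesis using that unfolding ey_def by simp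
  qed
  have inj: "ey m \<noteq> ey n" if "m < 2*M" "n < 2*M" "m \<noteq> n" for m n
  proof (cases "even m = even n")
    case True
    have "m = 2 * (m div 2) + m mod 2" "n = 2 * (n div 2) + n mod 2" by simp_all
    moreover have "m mod 2 = n mod 2" using True by (simp add: mod2_eq_if)
    ultimately have ne: "m div 2 \<noteq> n div 2" using that(3) by metis
    have mem: "m div 2 \<in> {0..<M}" "n div 2 \<in> {0..<M}" using that by auto
    show ?thesis
    proof (cases "even m")
      case ev: True
      then have "even n" using True by simp
      then show ?thesis using ev ne mem inj_onD[OF iA] unfolding ey_def by metis
    next
      case od: False
      then have "odd n" using True by simp
      then show ?thesis using od ne mem inj_onD[OF iB] unfolding ey_def by metis
    qed
  next
    case False
    show ?thesis
    proof (cases "even m")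
      case True
      then have "ey m \<in> A" "ey n \<in> B" using False that eyA eyB by auto
      then show ?thesis using disj by auto
    next
      case F2: False
      then have "ey m \<in> B" "ey n \<in> A" using False that eyA eyB by auto
      then show ?thesis using disj by auto
    qed
  qed
  have "sat \<phi> (\<lambda>_. undefined) ey f" if "f \<in> SS M" for f
    using that unfolding SS_def
  proof (elim UnE imageE)
    fix n assume "n \<in> {..<2*M}" "f = pf n"
    then show ?thesis using eyA eyB assms(5,6)
      by (cases "even n") auto
  next
    fix x assume x: "x \<in> {..<M} \<times> {..<M}" "f = (\<lambda>(i,j). nf i j) x"
    obtain i j where ij: "x = (i,j)" by (cases x)
    have "ey (2*i) \<in> A" "ey (2*j+1) \<in> B" using x ij eyA eyB by auto
    then show ?thesis using x ij assms(7) by auto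
  next
    fix x assume x: "x \<in> {(m,n). m < 2*M \<and> n < 2*M \<and> m \<noteq> n}" "f = (\<lambda>(m,n). df m n) x"
    obtain m n where ij: "x = (m,n)" by (cases x)
    then show ?thesis using x inj by auto
  qed
  then show ?thesis unfolding satisfiable_def by blast
qed

lemma SS_params: "f \<in> SS M \<Longrightarrow> xparams f = {} \<and> yparams f = {}"
  unfolding SS_def by (elim UnE imageE) auto

theorem mainTheorem3:
  fixes \<phi> :: "'a \<Rightarrow> 'b \<Rightarrow> bool"
  assumes sat: "saturated \<phi>"
    and neg: "\<forall>y. \<exists>z. \<forall>x. \<phi> x z \<longleftrightarrow> \<not> \<phi> x y"
    and reg: "\<exists>\<delta>::real. 0 < \<delta> \<and> \<delta> < 1 \<and>
      (\<forall>\<epsilon>::real. 0 < \<epsilon> \<and> \<epsilon> < 1 \<longrightarrow> (\<forall>N::nat. \<exists>X Y.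
         finite X \<and> finite Y \<and> X \<inter> Y = {} \<and>
         X \<subseteq> {y. P1 \<phi> y} \<and> Y \<subseteq> {y. P1 \<phi> y} \<and>
         card X = card Y \<and> card X \<ge> N \<and>
         eps_regular \<phi> \<epsilon> X Y \<and> density \<phi> X Y = \<delta>))"
  shows "\<exists>X Y. infinite_empty_pair \<phi> X Y"
  proof -
  define \<Sigma> where "\<Sigma> = (\<Union>M. SS M :: ('a, 'b) fm set)"
  have xp: "\<Union> (xparams ` \<Sigma>) = {}" "\<Union> (yparams ` \<Sigma>) = {}"
    unfolding \<Sigma>_def using SS_params by fastforce+
  have fin: "satisfiable \<phi> \<Sigma>0" if S0: "\<Sigma>0 \<subseteq> \<Sigma>" "finite \<Sigma>0" for \<Sigma>0
  proof -
    have "\<Sigma>0 \<subseteq> (\<Union>M. SS M)" using S0(1) unfolding \<Sigma>_def .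
    then obtain M where M: "\<Sigma>0 \<subseteq> SS M" using finite_in_SS[OF S0(2)] by blast
    have ex: "\<exists>A B. finite A \<and> finite B \<and> card A = M \<and> card B = M \<and> A \<subseteq> {y. P1 \<phi> y}
     \<and> B \<subseteq> {y. P1 \<phi> y} \<and> (\<forall>x\<in>A. \<forall>y\<in>B. \<not> P2 \<phi> x y)"
      by (rule finite_empty_pairs[OF reg])
    then obtain A B where h: "finite A" "finite B" "card A = M" "card B = M" "A \<subseteq> {y. P1 \<phi> y}"
     "B \<subseteq> {y. P1 \<phi> y}" "\<forall>x\<in>A. \<forall>y\<in>B. \<not> P2 \<phi> x y"
      by (elim exE conjE) (rule that)
    have "satisfiable \<phi> (SS M)" by (rule SS_sat[OF h])
    then show ?thesis using M unfolding satisfiable_def by blast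
  qed
  have C: "countable (\<Union> (xparams ` \<Sigma>)) \<and> countable (\<Union> (yparams ` \<Sigma>))
        \<and> (\<forall>\<Sigma>0. \<Sigma>0 \<subseteq> \<Sigma> \<and> finite \<Sigma>0 \<longrightarrow> satisfiable \<phi> \<Sigma>0)"
    using xp fin by simp
  have "satisfiable \<phi> \<Sigma>"
    using mp[OF sat[unfolded saturated_def, THEN spec[of _ \<Sigma>]] C] .
  then obtain ex ey where S: "\<forall>f\<in>\<Sigma>. sat \<phi> ex ey f" unfolding satisfiable_def by blast
  have inS: "f \<in> SS M \<Longrightarrow> sat \<phi> ex ey f" for f M
  proof -
    assume "f \<in> SS M"
    then have "f \<in> \<Sigma>" unfolding \<Sigma>_def by blast
    then show ?thesis using S by blast
  qed
  have P: "P1 \<phi> (ey n)" for n using inS[OF pf_SS[of n]] by simp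
  have E: "\<not> P2 \<phi> (ey (2*i)) (ey (2*j+1))" for i j using inS[OF nf_SS[of i j]] by simp
  have I: "inj ey"
  proof (rule injI, rule ccontr)
    fix m n assume "ey m = ey n" "m \<noteq> n"
    then show False using inS[OF df_SS[OF \<open>m \<noteq> n\<close>]] by simp
  qed
  define X where "X = range (\<lambda>i. ey (2*i))"
  define Y where "Y = range (\<lambda>i. ey (2*i+1))"
  have i1: "inj (\<lambda>i. ey (2*i))"
  proof (rule injI)
    fix x y :: nat assume "ey (2*x) = ey (2*y)"
    then have "2*x = 2*y" using injD[OF I] by blast
    then show "x = y" by simp
  qed
  have i2: "inj (\<lambda>i. ey (2*i+1))"
  proof (rule injI)
    fix x y :: nat assume "ey (2*x+1) = ey (2*y+1)"
    then have "2*x+1 = 2*y+1" using injD[OF I] by blast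
    then show "x = y" by simp
  qed
  have eX: "X \<approx> (UNIV :: nat set)" unfolding X_def using inj_on_image_eqpoll_self[OF i1] .
  have eY: "Y \<approx> (UNIV :: nat set)" unfolding Y_def using inj_on_image_eqpoll_self[OF i2] .
  have "X \<approx> Y" using eX eY eqpoll_sym eqpoll_trans by blast
  moreover have "infinite X" using eX eqpoll_finite_iff by blast
  moreover have "X \<subseteq> {y. P1 \<phi> y}" "Y \<subseteq> {y. P1 \<phi> y}" using P X_def Y_def by auto
  moreover have "\<forall>x\<in>X. \<forall>y\<in>Y. \<not> P2 \<phi> x y" using E X_def Y_def by auto
  ultimately show ?thesis unfolding infinite_empty_pair_def by blast
qed

end
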